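(* Let $\mathfrak g\xrightarrow{\mu}\mathfrak h$ be a crossed module of Lie algebras with action $\mathcal L$, let $\phi:W\to V$ be linear and $(\rho_0^1,\rho_0^0,\rho_1)$ a 2-representation on $\phi$. Then $$\bar\rho:\mathfrak g\oplus_{\mathcal L}\mathfrak h\to\mathfrak{gl}(W\oplus V),\qquad (x,y)\mapsto\begin{pmatrix}\rho_0^1(y+\mu(x)) & \rho_1(x)\\ 0 & \rho_0^0(y)\end{pmatrix}$$ (acting on column vectors $(w,v)$) is a Lie algebra representation.
   Context: A crossed module of Lie algebras consists of Lie algebras $\mathfrak g,\mathfrak h$, a Lie algebra homomorphism $\mu:\mathfrak g\to\mathfrak h$ and a Lie algebra homomorphism $\mathcal L:\mathfrak h\to\mathrm{Der}(\mathfrak g)$ with $\mu(\mathcal L_yx)=[y,\mu(x)]$ and $\mathcal L_{\mu(x_0)}x_1=[x_0,x_1]$. $\mathfrak g\oplus_{\mathcal L}\mathfrak h$ is $\mathfrak g\oplus\mathfrak h$ with bracket $[(x_0,y_0),(x_1,y_1)]=([x_0,x_1]+\mathcal L_{y_0}x_1-\mathcal L_{y_1}x_0,[y_0,y_1])$. A 2-representation on $\phi:W\to V$: linear maps $\rho_0^1:\mathfrak h\to\mathfrak{gl}(W)$, $\rho_0^0:\mathfrak h\to\mathfrak{gl}(V)$, $\rho_1:\mathfrak g\to\mathrm{Hom}(V,W)$ with $\rho_0^1,\rho_0^0$ Lie algebra representations, $\phi\rho_0^1(y)=\rho_0^0(y)\phi$, $\rho_1([x_0,x_1])=\rho_1(x_0)\phi\rho_1(x_1)-\rho_1(x_1)\phi\rho_1(x_0)$,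 $\rho_0^0(\mu(x))=\phi\rho_1(x)$, $\rho_0^1(\mu(x))=\rho_1(x)\phi$, $\rho_1(\mathcal L_yx)=\rho_0^1(y)\rho_1(x)-\rho_1(x)\rho_0^0(y)$. *)

theory Defs
  imports Complex_Main "HOL-Library.Product_Plus"
begin

definition bilinear_map ::
  "('k::field \<Rightarrow> 'a::ab_group_add \<Rightarrow> 'a) \<Rightarrow> ('k \<Rightarrow> 'b::ab_group_add \<Rightarrow> 'b)
   \<Rightarrow> ('k \<Rightarrow> 'c::ab_group_add \<Rightarrow> 'c) \<Rightarrow> ('a \<Rightarrow> 'b \<Rightarrow> 'c) \<Rightarrow> bool" where
  "bilinear_map sa sb sc f \<longleftrightarrow>
     (\<forall>x. Vector_Spaces.linear sb sc (f x)) \<and> (\<forall>y. Vector_Spaces.linear sa sc (\<lambda>x'. f x' y))"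

definition lie_algebra ::
  "('k::field \<Rightarrow> 'g::ab_group_add \<Rightarrow> 'g) \<Rightarrow> ('g \<Rightarrow> 'g \<Rightarrow> 'g) \<Rightarrow> bool" where
  "lie_algebra s br \<longleftrightarrow> vector_space s \<and> bilinear_map s s s br \<and>
     (\<forall>x. br x x = 0) \<and>
     (\<forall>x y z. br x (br y z) + br y (br z x) + br z (br x y) = 0)"

definition lie_hom ::
  "('k::field \<Rightarrow> 'g::ab_group_add \<Rightarrow> 'g) \<Rightarrow> ('g \<Rightarrow> 'g \<Rightarrow> 'g)
   \<Rightarrow> ('k \<Rightarrow> 'h::ab_group_add \<Rightarrow> 'h) \<Rightarrow> ('h \<Rightarrow> 'h \<Rightarrow> 'h) \<Rightarrow> ('g \<Rightarrow> 'h) \<Rightarrow> bool" where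
  "lie_hom sg brg sh brh f \<longleftrightarrow> Vector_Spaces.linear sg sh f \<and> (\<forall>x y. f (brg x y) = brh (f x) (f y))"

definition linear_into_hom ::
  "('k::field \<Rightarrow> 'g::ab_group_add \<Rightarrow> 'g) \<Rightarrow> ('k \<Rightarrow> 'w::ab_group_add \<Rightarrow> 'w)
   \<Rightarrow> ('k \<Rightarrow> 'v::ab_group_add \<Rightarrow> 'v) \<Rightarrow> ('g \<Rightarrow> 'w \<Rightarrow> 'v) \<Rightarrow> bool" where
  "linear_into_hom sg sw sv r \<longleftrightarrow>
     (\<forall>x. Vector_Spaces.linear sw sv (r x)) \<and> (\<forall>w. Vector_Spaces.linear sg sv (\<lambda>x. r x w))"

definition lie_rep ::
  "('k::field \<Rightarrow> 'g::ab_group_add \<Rightarrow> 'g) \<Rightarrow> ('g \<Rightarrow> 'g \<Rightarrow> 'g)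
   \<Rightarrow> ('k \<Rightarrow> 'w::ab_group_add \<Rightarrow> 'w) \<Rightarrow> ('g \<Rightarrow> 'w \<Rightarrow> 'w) \<Rightarrow> bool" where
  "lie_rep sg brg sw r \<longleftrightarrow> linear_into_hom sg sw sw r \<and>
     (\<forall>x y w. r (brg x y) w = r x (r y w) - r y (r x w))"

definition derivation ::
  "('k::field \<Rightarrow> 'g::ab_group_add \<Rightarrow> 'g) \<Rightarrow> ('g \<Rightarrow> 'g \<Rightarrow> 'g) \<Rightarrow> ('g \<Rightarrow> 'g) \<Rightarrow> bool" where
  "derivation sg brg D \<longleftrightarrow> Vector_Spaces.linear sg sg D \<and>
     (\<forall>x y. D (brg x y) = brg (D x) y + brg x (D y))"

definition crossed_module ::
  "('k::field \<Rightarrow> 'g::ab_group_add \<Rightarrow> 'g) \<Rightarrow> ('g \<Rightarrow> 'g \<Rightarrow> 'g)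
   \<Rightarrow> ('k \<Rightarrow> 'h::ab_group_add \<Rightarrow> 'h) \<Rightarrow> ('h \<Rightarrow> 'h \<Rightarrow> 'h)
   \<Rightarrow> ('g \<Rightarrow> 'h) \<Rightarrow> ('h \<Rightarrow> 'g \<Rightarrow> 'g) \<Rightarrow> bool" where
  "crossed_module sg brg sh brh mu L \<longleftrightarrow>
     lie_algebra sg brg \<and> lie_algebra sh brh \<and>
     lie_hom sg brg sh brh mu \<and>
     (\<forall>y. derivation sg brg (L y)) \<and>
     lie_rep sh brh sg L \<and>
     (\<forall>y x. mu (L y x) = brh y (mu x)) \<and>
     (\<forall>x0 x1. L (mu x0) x1 = brg x0 x1)"

definition prod_scale ::
  "('k \<Rightarrow> 'a \<Rightarrow> 'a) \<Rightarrow> ('k \<Rightarrow> 'b \<Rightarrow> 'b) \<Rightarrow> 'k \<Rightarrow> 'a \<times> 'b \<Rightarrow> 'a \<times> 'b" where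
  "prod_scale sa sb a p = (sa a (fst p), sb a (snd p))"

definition semidirect_bracket ::
  "('g::ab_group_add \<Rightarrow> 'g \<Rightarrow> 'g) \<Rightarrow> ('h \<Rightarrow> 'h \<Rightarrow> 'h) \<Rightarrow> ('h \<Rightarrow> 'g \<Rightarrow> 'g)
   \<Rightarrow> 'g \<times> 'h \<Rightarrow> 'g \<times> 'h \<Rightarrow> 'g \<times> 'h" where
  "semidirect_bracket brg brh L p q =
     (brg (fst p) (fst q) + L (snd p) (fst q) - L (snd q) (fst p), brh (snd p) (snd q))"

definition two_rep ::
  "('k::field \<Rightarrow> 'g::ab_group_add \<Rightarrow> 'g) \<Rightarrow> ('g \<Rightarrow> 'g \<Rightarrow> 'g)
   \<Rightarrow> ('k \<Rightarrow> 'h::ab_group_add \<Rightarrow> 'h) \<Rightarrow> ('h \<Rightarrow> 'h \<Rightarrow> 'h)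
   \<Rightarrow> ('g \<Rightarrow> 'h) \<Rightarrow> ('h \<Rightarrow> 'g \<Rightarrow> 'g)
   \<Rightarrow> ('k \<Rightarrow> 'w::ab_group_add \<Rightarrow> 'w) \<Rightarrow> ('k \<Rightarrow> 'v::ab_group_add \<Rightarrow> 'v) \<Rightarrow> ('w \<Rightarrow> 'v)
   \<Rightarrow> ('h \<Rightarrow> 'w \<Rightarrow> 'w) \<Rightarrow> ('h \<Rightarrow> 'v \<Rightarrow> 'v) \<Rightarrow> ('g \<Rightarrow> 'v \<Rightarrow> 'w) \<Rightarrow> bool" where
  "two_rep sg brg sh brh mu L sw sv phi r01 r00 r1 \<longleftrightarrow>
     lie_rep sh brh sw r01 \<and> lie_rep sh brh sv r00 \<and>
     linear_into_hom sg sv sw r1 \<and>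
     (\<forall>y w. phi (r01 y w) = r00 y (phi w)) \<and>
     (\<forall>x0 x1 v. r1 (brg x0 x1) v = r1 x0 (phi (r1 x1 v)) - r1 x1 (phi (r1 x0 v))) \<and>
     (\<forall>x v. r00 (mu x) v = phi (r1 x v)) \<and>
     (\<forall>x w. r01 (mu x) w = r1 x (phi w)) \<and>
     (\<forall>y x v. r1 (L y x) v = r01 y (r1 x v) - r1 x (r00 y v))"

definition rho_bar ::
  "('g \<Rightarrow> 'h::plus) \<Rightarrow> ('h \<Rightarrow> 'w::plus \<Rightarrow> 'w) \<Rightarrow> ('h \<Rightarrow> 'v \<Rightarrow> 'v) \<Rightarrow> ('g \<Rightarrow> 'v \<Rightarrow> 'w)
   \<Rightarrow> 'g \<times> 'h \<Rightarrow> 'w \<times> 'v \<Rightarrow> 'w \<times> 'v" where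
  "rho_bar mu r01 r00 r1 p u =
     (r01 (snd p + mu (fst p)) (fst u) + r1 (fst p) (snd u), r00 (snd p) (snd u))"

end

theory Submission
  imports Defs
begin

lemma vs_prod:
  assumes "vector_space sa" "vector_space sb"
  shows "vector_space (prod_scale sa sb)"
  using assms unfolding vector_space_def prod_scale_def by simp

lemma antisym_br:
  assumes "lie_algebra s br"
  shows "br a b = - br b a"
proof -
  have z: "\<And>x. br x x = 0" and bl: "bilinear_map s s s br" using assms unfolding lie_algebra_def by auto
  have l1: "\<And>x y z. br x (y + z) = br x y + br x z"
    using bl unfolding bilinear_map_def Vector_Spaces.linear_iff by blast
  have l2: "\<And>x y z. br (y + z) x = br y x + br z x"
    using bl unfolding bilinear_map_def Vector_Spaces.linear_iff by blast
  have e: "br (a+b) (a+b) = br a a + br a b + (br b a + br b b)" by (simp only: l1 l2 add_ac)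
  hence "br a b + br b a = 0" using z by simp
  thus ?thesis by (metis eq_neg_iff_add_eq_0)
qed

theorem mainTheorem3:
  fixes sg :: "'k::field \<Rightarrow> 'g::ab_group_add \<Rightarrow> 'g" and brg :: "'g \<Rightarrow> 'g \<Rightarrow> 'g"
    and sh :: "'k \<Rightarrow> 'h::ab_group_add \<Rightarrow> 'h" and brh :: "'h \<Rightarrow> 'h \<Rightarrow> 'h"
    and mu :: "'g \<Rightarrow> 'h" and L :: "'h \<Rightarrow> 'g \<Rightarrow> 'g"
    and sw :: "'k \<Rightarrow> 'w::ab_group_add \<Rightarrow> 'w" and sv :: "'k \<Rightarrow> 'v::ab_group_add \<Rightarrow> 'v"
    and phi :: "'w \<Rightarrow> 'v"
    and r01 :: "'h \<Rightarrow> 'w \<Rightarrow> 'w" and r00 :: "'h \<Rightarrow> 'v \<Rightarrow> 'v" and r1 :: "'g \<Rightarrow> 'v \<Rightarrow> 'w"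
  assumes "crossed_module sg brg sh brh mu L"
    and "vector_space sw" and "vector_space sv"
    and "Vector_Spaces.linear sw sv phi"
    and "two_rep sg brg sh brh mu L sw sv phi r01 r00 r1"
  shows "lie_rep (prod_scale sg sh) (semidirect_bracket brg brh L)
           (prod_scale sw sv) (rho_bar mu r01 r00 r1)"
proof -
  note cm = assms(1)[unfolded crossed_module_def]
  note tr = assms(5)[unfolded two_rep_def]
  have lag: "lie_algebra sg brg" and lah: "lie_algebra sh brh" using cm by auto
  have vsg: "vector_space sg" and vsh: "vector_space sh" using lag lah unfolding lie_algebra_def by auto
  note vsw = assms(2) and vsv = assms(3)
  have muh: "lie_hom sg brg sh brh mu" using cm by auto
  have mu_add: "\<And>a b. mu (a+b) = mu a + mu b" and mu_sc: "\<And>c a. mu (sg c a) = sh c (mu a)"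
    and mu_br: "\<And>a b. mu (brg a b) = brh (mu a) (mu b)"
    using muh unfolding lie_hom_def Vector_Spaces.linear_iff by auto
  have mu_diff: "\<And>a b. mu (a-b) = mu a - mu b"
    by (metis add_diff_cancel mu_add diff_add_cancel eq_diff_eq)
  have muL: "\<And>y x. mu (L y x) = brh y (mu x)" using cm by auto
  have r01rep: "lie_rep sh brh sw r01" and r00rep: "lie_rep sh brh sv r00"
    and r1l: "linear_into_hom sg sv sw r1" using tr by auto
  have r01_w_add: "\<And>y a b. r01 y (a+b) = r01 y a + r01 y b"
    and r01_w_sc: "\<And>y c a. r01 y (sw c a) = sw c (r01 y a)"
    and r01_y_add: "\<And>y z a. r01 (y+z) a = r01 y a + r01 z a"
    and r01_y_sc: "\<And>y c a. r01 (sh c y) a = sw c (r01 y a)"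
    and r01_br: "\<And>x y w. r01 (brh x y) w = r01 x (r01 y w) - r01 y (r01 x w)"
    using r01rep unfolding lie_rep_def linear_into_hom_def Vector_Spaces.linear_iff by auto
  have r00_w_add: "\<And>y a b. r00 y (a+b) = r00 y a + r00 y b"
    and r00_w_sc: "\<And>y c a. r00 y (sv c a) = sv c (r00 y a)"
    and r00_y_add: "\<And>y z a. r00 (y+z) a = r00 y a + r00 z a"
    and r00_y_sc: "\<And>y c a. r00 (sh c y) a = sv c (r00 y a)"
    and r00_br: "\<And>x y w. r00 (brh x y) w = r00 x (r00 y w) - r00 y (r00 x w)"
    using r00rep unfolding lie_rep_def linear_into_hom_def Vector_Spaces.linear_iff by auto
  have r1_w_add: "\<And>y a b. r1 y (a+b) = r1 y a + r1 y b"
    and r1_w_sc: "\<And>y c a. r1 y (sv c a) = sw c (r1 y a)"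
    and r1_y_add: "\<And>y z a. r1 (y+z) a = r1 y a + r1 z a"
    and r1_y_sc: "\<And>y c a. r1 (sg c y) a = sw c (r1 y a)"
    using r1l unfolding linear_into_hom_def Vector_Spaces.linear_iff by auto
  have r01_y_diff: "\<And>y z a. r01 (y-z) a = r01 y a - r01 z a"
    by (metis r01_y_add diff_add_cancel eq_diff_eq)
  have r1_y_diff: "\<And>y z a. r1 (y-z) a = r1 y a - r1 z a"
    by (metis r1_y_add diff_add_cancel eq_diff_eq)
  have r1_br: "\<And>x0 x1 v. r1 (brg x0 x1) v = r1 x0 (phi (r1 x1 v)) - r1 x1 (phi (r1 x0 v))"
    and r01_mu: "\<And>x w. r01 (mu x) w = r1 x (phi w)"
    and r1_L: "\<And>y x v. r1 (L y x) v = r01 y (r1 x v) - r1 x (r00 y v)"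
    using tr by auto
  have anti: "\<And>a b. brh a b = - brh b a" using antisym_br[OF lah] .
  have brh_l: "\<And>x y z. brh (y + z) x = brh y x + brh z x"
    and brh_r: "\<And>x y z. brh x (y + z) = brh x y + brh x z"
    using lah unfolding lie_algebra_def bilinear_map_def Vector_Spaces.linear_iff by auto
  show ?thesis
    unfolding lie_rep_def linear_into_hom_def
  proof (intro conjI allI)
    fix p :: "'g \<times> 'h"
    show "Vector_Spaces.linear (prod_scale sw sv) (prod_scale sw sv) (rho_bar mu r01 r00 r1 p)"
      unfolding Vector_Spaces.linear_iff
      using vs_prod[OF vsw vsv]
      by (simp add: rho_bar_def prod_scale_def r01_w_add r01_w_sc r1_w_add r1_w_sc r00_w_add r00_w_sc
          vector_space_def)
  next
    fix u :: "'w \<times> 'v"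
    show "Vector_Spaces.linear (prod_scale sg sh) (prod_scale sw sv) (\<lambda>p. rho_bar mu r01 r00 r1 p u)"
      unfolding Vector_Spaces.linear_iff
      using vs_prod[OF vsw vsv] vs_prod[OF vsg vsh]
      apply (simp add: rho_bar_def prod_scale_def r01_y_add r01_y_sc r1_y_add r1_y_sc r00_y_add r00_y_sc
          mu_add mu_sc)
      using vsw unfolding vector_space_def by (simp add: algebra_simps)
  next
    fix p q :: "'g \<times> 'h" and u :: "'w \<times> 'v"
    obtain x0 y0 where p: "p = (x0, y0)" by (cases p)
    obtain x1 y1 where q: "q = (x1, y1)" by (cases q)
    obtain w v where u: "u = (w, v)" by (cases u)
    show "rho_bar mu r01 r00 r1 (semidirect_bracket brg brh L p q) u =
       rho_bar mu r01 r00 r1 p (rho_bar mu r01 r00 r1 q u) -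
       rho_bar mu r01 r00 r1 q (rho_bar mu r01 r00 r1 p u)"
      unfolding p q u rho_bar_def semidirect_bracket_def
      apply (simp add: mu_add mu_diff mu_br muL r01_y_add r01_y_diff r01_w_add r1_y_add r1_y_diff
           r1_w_add r1_br r1_L r00_br brh_l brh_r r01_br r01_mu)
      done
  qed
qed

end
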